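(* Let $\theta,\eta\in(0,\tfrac{\pi}{4}]$ with $\theta\le\eta$, and let the qubits $A,C_1,C_2,B$ be in the state $|\Phi_\theta\rangle_{AC_1}\otimes|\Phi_\eta\rangle_{C_2B}$. Let $\{P_k\}_{k=1}^4$, $P_k=|\varphi_k\rangle\langle\varphi_k|$, be a projective measurement on $C_1C_2\cong\mathbb{C}^2\otimes\mathbb{C}^2$ with rank-one projectors. For each outcome $k$ with probability $p_k>0$, let $|\phi_k\rangle_{AB}$ be the post-measurement pure state of $AB$, and let $P_E(\phi_k)$ be twice the smallest eigenvalue of its reduced density operator on $A$ (the optimal two-party LOCC probability of converting $|\phi_k\rangle$ into a maximally entangled state). Then $$\sum_k p_k P_E(\phi_k)=2\sin^2\theta$$ (i.e. the measurement, followed by optimal LOCC between Alice and Bob, achieves the optimal entanglement concentration rate $\min\{2\sin^2\theta,2\sin^2\eta\}=2\sin^2\theta$) if and only if $$\sum_{k=1}^4\sqrt{\big(\mathrm{tr}((T_1\otimes T_2)P_k)\big)^2+\sin^2 2\theta\,\big|\mathrm{tr}((|0\rangle\langle1|\otimes T_2)P_k)\big|^2}=\cos2\theta,$$ where $T_1=\cos^2\theta|0\rangle\langle0|-\sin^2\theta|1\rangle\langle1|$ and $T_2=\cos^2\eta|0\rangle\langle0|+\sin^2\eta|1\rangle\langle1|$, with the first tensor factor acting on $C_1$ and the second on $C_2$.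
   Context: For $\lambda\in[0,\tfrac{\pi}{2}]$, $|\Phi_\lambda\rangle=\cos\lambda|00\rangle+\sin\lambda|11\rangle$. Alice holds qubit $A$, Clare holds $C_1$ (initially entangled with $A$) and $C_2$ (initially entangled with $B$), Bob holds $B$. The post-measurement state for outcome $k$ is $|\phi_k\rangle_{AB}=p_k^{-1/2}(\langle\varphi_k|_{C_1C_2}\otimes I_{AB})|\Phi_\theta\rangle_{AC_1}|\Phi_\eta\rangle_{C_2B}$ with $p_k$ the squared norm of the unnormalized vector. *)

theory Defs
  imports "HOL-Analysis.Analysis"
begin

type_synonym qubit2 = "complex ^ (2 \<times> 2)"
type_synonym op2 = "complex ^ (2 \<times> 2) ^ (2 \<times> 2)"

definition Phi :: "real \<Rightarrow> qubit2" where
  "Phi l = (\<chi> p. case p of (x, y) \<Rightarrow> if x = y then (if x = 0 then complex_of_real (cos l) else complex_of_real (sin l)) else 0)"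

definition cinner :: "complex ^ 'n \<Rightarrow> complex ^ 'n \<Rightarrow> complex" where
  "cinner u v = (\<Sum>i\<in>UNIV. cnj (u $ i) * v $ i)"

definition unit_vec :: "complex ^ 'n \<Rightarrow> bool" where
  "unit_vec v \<longleftrightarrow> cinner v v = 1"

definition proj :: "complex ^ 'n \<Rightarrow> complex ^ 'n ^ 'n" where
  "proj v = (\<chi> r c. v $ r * cnj (v $ c))"

text \<open>Kronecker product (first factor acts on the first qubit)\<close>
definition kron :: "complex ^ 2 ^ 2 \<Rightarrow> complex ^ 2 ^ 2 \<Rightarrow> op2" where
  "kron A B = (\<chi> p q. case (p, q) of ((i, j), (k, l)) \<Rightarrow> A $ i $ k * B $ j $ l)"

definition ket_bra :: "2 \<Rightarrow> 2 \<Rightarrow> complex ^ 2 ^ 2" where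
  "ket_bra a b = (\<chi> i j. if i = a \<and> j = b then 1 else 0)"

definition T1 :: "real \<Rightarrow> complex ^ 2 ^ 2" where
  "T1 th = (\<chi> i j. if i = j then (if i = 0 then complex_of_real ((cos th)\<^sup>2) else - complex_of_real ((sin th)\<^sup>2)) else 0)"

definition T2 :: "real \<Rightarrow> complex ^ 2 ^ 2" where
  "T2 et = (\<chi> i j. if i = j then (if i = 0 then complex_of_real ((cos et)\<^sup>2) else complex_of_real ((sin et)\<^sup>2)) else 0)"

text \<open>Unnormalized post-measurement vector on AB:
  (<phi|_{C1C2} tensor I_{AB}) |Phi_th>_{A C1} |Phi_et>_{C2 B}\<close>
definition post_unnorm :: "real \<Rightarrow> real \<Rightarrow> qubit2 \<Rightarrow> qubit2" where
  "post_unnorm th et v = (\<chi> p. case p of (a, b) \<Rightarrow> \<Sum>c1\<in>UNIV. \<Sum>c2\<in>UNIV.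
      cnj (v $ (c1, c2)) * (Phi th $ (a, c1)) * (Phi et $ (c2, b)))"

definition outcome_prob :: "real \<Rightarrow> real \<Rightarrow> qubit2 \<Rightarrow> real" where
  "outcome_prob th et v = (\<Sum>x\<in>UNIV. (cmod (post_unnorm th et v $ x))\<^sup>2)"

definition post_state :: "real \<Rightarrow> real \<Rightarrow> qubit2 \<Rightarrow> qubit2" where
  "post_state th et v = (\<chi> x. complex_of_real (1 / sqrt (outcome_prob th et v)) * post_unnorm th et v $ x)"

definition reduced_A :: "qubit2 \<Rightarrow> complex ^ 2 ^ 2" where
  "reduced_A w = (\<chi> a a'. \<Sum>b\<in>UNIV. w $ (a, b) * cnj (w $ (a', b)))"

definition min_eigenvalue :: "complex ^ 'n ^ 'n \<Rightarrow> real" where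
  "min_eigenvalue M = Min {r::real. \<exists>v. v \<noteq> 0 \<and> M *v v = complex_of_real r *s v}"

definition P_E :: "qubit2 \<Rightarrow> real" where
  "P_E w = 2 * min_eigenvalue (reduced_A w)"

end

theory Submission
  imports Defs
begin
lemma two0: "(2::2) = 0" by simp
lemma UNIV_2': "(UNIV::2 set) = {0,1}"
  using UNIV_2 two0 by auto
lemma two_cases: "(i::2) = 0 \<or> i = 1" using UNIV_2' by blast
lemma all2: "(\<forall>i::2. P i) \<longleftrightarrow> P 0 \<and> P 1"
  by (metis two_cases)
lemma sum2: "sum f (UNIV::2 set) = f 0 + f 1" by (simp add: UNIV_2')
lemma sum22: "sum f (UNIV::(2\<times>2) set) = f (0,0) + f (0,1) + f (1,0) + f(1,1)"
proof -
  have "sum f (UNIV::(2\<times>2) set) = (\<Sum>a\<in>UNIV. \<Sum>b\<in>UNIV. f (a,b))"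
    unfolding UNIV_Times_UNIV[symmetric] sum.cartesian_product by simp
  then show ?thesis by (simp add: sum2 add.assoc)
qed
lemma vec2_neq0: "(v::'a::zero^2) \<noteq> 0 \<longleftrightarrow> v$0 \<noteq> 0 \<or> v$1 \<noteq> 0"
  unfolding vec_eq_iff all2 by simp
lemma vec2_eq: "(v::'a^2) = w \<longleftrightarrow> v$0 = w$0 \<and> v$1 = w$1"
  unfolding vec_eq_iff all2 by simp

lemma cnj_mult_self: "b * cnj b = complex_of_real ((cmod b)^2)"
  using complex_norm_square by auto

lemma eig_root:
  fixes M :: "complex^2^2" and a d r :: real
  assumes "M$0$0 = of_real a" "M$1$1 = of_real d" "M$1$0 = cnj (M$0$1)"
    and "v \<noteq> 0" and "M *v v = complex_of_real r *s v"
  shows "(a - r) * (d - r) - (cmod (M$0$1))^2 = 0"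
proof -
  define b where "b = M$0$1"
  have e1: "of_real a * v$0 + b * v$1 = of_real r * v$0"
    using arg_cong[OF assms(5), of "\<lambda>x. x$0"] assms
    by (simp add: matrix_vector_mult_def sum2 vector_scalar_mult_def b_def)
  have e2: "cnj b * v$0 + of_real d * v$1 = of_real r * v$1"
    using arg_cong[OF assms(5), of "\<lambda>x. x$1"] assms
    by (simp add: matrix_vector_mult_def sum2 vector_scalar_mult_def b_def)
  have bb: "b * cnj b = of_real ((cmod b)^2)" by (rule cnj_mult_self)
  have h1: "(of_real a - of_real r) * v$0 = - b * v$1" using e1 by (simp add: algebra_simps)
  have h2: "(of_real d - of_real r) * v$1 = - cnj b * v$0" using e2 by (simp add: algebra_simps)
  have q0: "complex_of_real ((a - r) * (d - r) - (cmod b)^2) * v$0 = 0"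
  proof -
    have "complex_of_real ((a - r) * (d - r) - (cmod b)^2) * v$0
       = (of_real d - of_real r) * ((of_real a - of_real r) * v$0) - (b * cnj b) * v$0"
      by (simp add: bb algebra_simps)
    also have "\<dots> = (- b) * ((of_real d - of_real r) * v$1) - (b * cnj b) * v$0"
      unfolding h1 by (simp add: algebra_simps)
    also have "\<dots> = 0" unfolding h2 by (simp add: algebra_simps)
    finally show ?thesis .
  qed
  have q1: "complex_of_real ((a - r) * (d - r) - (cmod b)^2) * v$1 = 0"
  proof -
    have "complex_of_real ((a - r) * (d - r) - (cmod b)^2) * v$1
       = (of_real a - of_real r) * ((of_real d - of_real r) * v$1) - (b * cnj b) * v$1"
      by (simp add: bb algebra_simps)
    also have "\<dots> = (- cnj b) * ((of_real a - of_real r) * v$0) - (b * cnj b) * v$1"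
      unfolding h2 by (simp add: algebra_simps)
    also have "\<dots> = 0" unfolding h1 by (simp add: algebra_simps)
    finally show ?thesis .
  qed
  have "complex_of_real ((a - r) * (d - r) - (cmod b)^2) = 0"
    using assms(4) q0 q1 unfolding vec2_neq0 by (metis mult_eq_0_iff)
  then show ?thesis unfolding b_def of_real_eq_0_iff .
qed

lemma min_eig2:
  fixes M :: "complex^2^2" and a d :: real
  assumes A: "M$0$0 = of_real a" "M$1$1 = of_real d" "M$1$0 = cnj (M$0$1)"
  shows "min_eigenvalue M = (a + d - sqrt ((a-d)^2 + 4*(cmod (M$0$1))^2))/2"
proof -
  define b where "b = M$0$1"
  define D where "D = (a-d)^2 + 4*(cmod b)^2"
  define l where "l = (a + d - sqrt D)/2"
  define l' where "l' = (a + d + sqrt D)/2"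
  define S where "S = {r::real. \<exists>v. v \<noteq> 0 \<and> M *v v = complex_of_real r *s v}"
  have D0: "D \<ge> 0" unfolding D_def by simp
  have sq: "(sqrt D)^2 = D" using D0 by simp
  have root: "r = l \<or> r = l'" and ge: "l \<le> r" if "r \<in> S" for r
  proof -
    from that obtain v where "v \<noteq> 0" "M *v v = complex_of_real r *s v" unfolding S_def by blast
    from eig_root[OF A this] have q: "(a - r) * (d - r) - (cmod b)^2 = 0" unfolding b_def .
    have "(2*r - (a+d))^2 = D" using q unfolding D_def by (simp add: power2_eq_square algebra_simps)
    then have "\<bar>2*r - (a+d)\<bar> = sqrt D" by (metis real_sqrt_abs)
    then show "r = l \<or> r = l'" "l \<le> r" unfolding l_def l'_def by (auto simp: abs_if split: if_splits)
  qed
  have hq: "(l - a) * (l - d) = (cmod b)^2"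
  proof -
    have "(l - a) * (l - d) = ((sqrt D)^2 - (a-d)^2)/4" unfolding l_def
      by (simp add: power2_eq_square field_simps)
    then show ?thesis using sq unfolding D_def by simp
  qed
  have lS: "l \<in> S"
  proof (cases "b = 0")
    case False
    define v :: "complex^2" where "v = (\<chi> i. if i = 0 then b else of_real (l - a))"
    have v0: "v$0 = b" "v$1 = of_real (l - a)" by (simp_all add: v_def)
    have "v \<noteq> 0" using False v0 vec2_neq0 by metis
    moreover have "M *v v = complex_of_real l *s v"
    proof -
      have "cnj b * b = of_real ((l - a) * (l - d))" using hq cnj_mult_self[of b] by (simp add: mult.commute)
      then have "cnj b * b + of_real d * of_real (l - a) = of_real l * of_real (l - a)"
        by (simp add: algebra_simps)
      note key = this
      have r0: "(M *v v)$0 = M$0$0 * v$0 + M$0$1 * v$1" by (simp add: matrix_vector_mult_def sum2)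
      have r1: "(M *v v)$1 = M$1$0 * v$0 + M$1$1 * v$1" by (simp add: matrix_vector_mult_def sum2)
      have c0: "(M *v v)$0 = of_real l * v$0" unfolding r0 A(1) v0 b_def[symmetric]
        by (simp add: algebra_simps)
      have c1: "(M *v v)$1 = of_real l * v$1" unfolding r1 A(2,3) v0 b_def[symmetric]
        using key by simp
      show ?thesis unfolding vec2_eq using c0 c1 by (simp add: vector_scalar_mult_def)
    qed
    ultimately show ?thesis unfolding S_def by blast
  next
    case True
    then have "sqrt D = \<bar>a - d\<bar>" unfolding D_def by simp
    then have lm: "l = min a d" unfolding l_def by (auto simp: abs_if min_def)
    show ?thesis
    proof (cases "a \<le> d")
      case True
      define v :: "complex^2" where "v = (\<chi> i. if i = 0 then 1 else 0)"
      have v0: "v$0 = 1" "v$1 = 0" by (simp_all add: v_def)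
      have "v \<noteq> 0" using v0 vec2_neq0 by (metis one_neq_zero)
      moreover have "M *v v = complex_of_real l *s v" unfolding vec2_eq using A v0 lm True \<open>b = 0\<close>
        by (simp add: matrix_vector_mult_def sum2 vector_scalar_mult_def b_def[symmetric])
      ultimately show ?thesis unfolding S_def by blast
    next
      case False
      define v :: "complex^2" where "v = (\<chi> i. if i = 0 then 0 else 1)"
      have v0: "v$0 = 0" "v$1 = 1" by (simp_all add: v_def)
      have "v \<noteq> 0" using v0 vec2_neq0 by (metis one_neq_zero)
      moreover have "M *v v = complex_of_real l *s v" unfolding vec2_eq using A v0 lm False \<open>b = 0\<close>
        by (simp add: matrix_vector_mult_def sum2 vector_scalar_mult_def b_def[symmetric])
      ultimately show ?thesis unfolding S_def by blast
    qed
  qed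
  have fin: "finite S" by (rule finite_subset[of _ "{l, l'}"]) (use root in auto)
  have "Min S = l" by (rule Min_eqI[OF fin]) (use ge lS in auto)
  then show ?thesis unfolding min_eigenvalue_def S_def[symmetric] l_def D_def b_def .
qed
lemma Phi_simps: "Phi l $ (0,0) = of_real (cos l)" "Phi l $ (1,1) = of_real (sin l)"
  "Phi l $ (0,1) = 0" "Phi l $ (1,0) = 0"
  by (simp_all add: Phi_def)

lemma pu: "post_unnorm th et v $ (i,j) = cnj (v$(i,j)) * Phi th $ (i,i) * Phi et $ (j,j)"
  using two_cases[of i] two_cases[of j]
  by (auto simp: post_unnorm_def sum2 Phi_simps)

lemma tr1: "trace (kron (T1 th) (T2 et) ** proj v) = of_real (
   (cos th)^2 * (cos et)^2 * (cmod (v$(0,0)))^2 + (cos th)^2 * (sin et)^2 * (cmod (v$(0,1)))^2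
 - (sin th)^2 * (cos et)^2 * (cmod (v$(1,0)))^2 - (sin th)^2 * (sin et)^2 * (cmod (v$(1,1)))^2)"
  by (simp add: trace_def sum22 matrix_matrix_mult_def kron_def T1_def T2_def proj_def cnj_mult_self)

lemma tr2: "trace (kron (ket_bra 0 1) (T2 et) ** proj v) = 
   of_real ((cos et)^2) * v$(1,0) * cnj (v$(0,0)) + of_real ((sin et)^2) * v$(1,1) * cnj (v$(0,1))"
  by (simp add: trace_def sum22 matrix_matrix_mult_def kron_def ket_bra_def T2_def proj_def)
lemma op_formula: "outcome_prob th et v =
   (cos th)^2 * (cos et)^2 * (cmod (v$(0,0)))^2 + (cos th)^2 * (sin et)^2 * (cmod (v$(0,1)))^2
 + (sin th)^2 * (cos et)^2 * (cmod (v$(1,0)))^2 + (sin th)^2 * (sin et)^2 * (cmod (v$(1,1)))^2"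
  by (simp add: outcome_prob_def sum22 pu Phi_simps norm_mult power_mult_distrib)

lemma redA: 
  assumes "outcome_prob th et v > 0"
  shows "reduced_A (post_state th et v) $ i $ j = of_real (1 / outcome_prob th et v) *
     (\<Sum>b\<in>UNIV. post_unnorm th et v $ (i,b) * cnj (post_unnorm th et v $ (j,b)))"
proof -
  define p where "p = outcome_prob th et v"
  have p0: "p > 0" using assms p_def by simp
  have "complex_of_real (1 / sqrt p) * complex_of_real (1 / sqrt p) = of_real (1/p)"
    using p0 by (simp add: real_sqrt_mult[symmetric] flip: of_real_mult)
  then show ?thesis
    by (simp add: reduced_A_def post_state_def sum_distrib_left algebra_simps p_def[symmetric])
qed
lemma cnj_mult_self': "cnj b * b = complex_of_real ((cmod b)^2)"
  using cnj_mult_self[of b] by (simp add: mult.commute)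

lemma cnj_mult_self2: "b * cnj b = complex_of_real (cmod b) * complex_of_real (cmod b)"
  using cnj_mult_self[of b] by (simp add: power2_eq_square)

lemma uu: "(cnj x * complex_of_real \<alpha> * complex_of_real \<beta>) * cnj (cnj x * complex_of_real \<alpha> * complex_of_real \<beta>) = complex_of_real (\<alpha>^2*\<beta>^2*(cmod x)^2)"
proof -
  have "(cnj x * complex_of_real \<alpha> * complex_of_real \<beta>) * cnj (cnj x * complex_of_real \<alpha> * complex_of_real \<beta>)
     = (x * cnj x) * complex_of_real (\<alpha>^2*\<beta>^2)" by (simp add: power2_eq_square algebra_simps)
  then show ?thesis by (simp add: cnj_mult_self algebra_simps)
qed

lemma per_vec:
  assumes pos: "outcome_prob th et v > 0"
  shows "outcome_prob th et v * P_E (post_state th et v) = outcome_prob th et v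
     - sqrt ((Re (trace (kron (T1 th) (T2 et) ** proj v)))\<^sup>2
              + (sin (2 * th))\<^sup>2 * (cmod (trace (kron (ket_bra 0 1) (T2 et) ** proj v)))\<^sup>2)"
proof -
  define p where "p = outcome_prob th et v"
  define c where "c = cos th"
  define s where "s = sin th"
  define C where "C = cos et"
  define S where "S = sin et"
  define n00 where "n00 = (cmod (v$(0,0)))^2"
  define n01 where "n01 = (cmod (v$(0,1)))^2"
  define n10 where "n10 = (cmod (v$(1,0)))^2"
  define n11 where "n11 = (cmod (v$(1,1)))^2"
  define Tv where "Tv = trace (kron (ket_bra 0 1) (T2 et) ** proj v)"
  define R where "R = Re (trace (kron (T1 th) (T2 et) ** proj v))"
  define \<rho> where "\<rho> = reduced_A (post_state th et v)"
  define a where "a = (c^2*C^2*n00 + c^2*S^2*n01)/p"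
  define d where "d = (s^2*C^2*n10 + s^2*S^2*n11)/p"
  have p0: "p > 0" using pos p_def by simp
  have pf: "p = c^2*C^2*n00 + c^2*S^2*n01 + s^2*C^2*n10 + s^2*S^2*n11"
    unfolding p_def op_formula c_def s_def C_def S_def n00_def n01_def n10_def n11_def by simp
  have Rf: "R = c^2*C^2*n00 + c^2*S^2*n01 - s^2*C^2*n10 - s^2*S^2*n11"
    unfolding R_def tr1 c_def s_def C_def S_def n00_def n01_def n10_def n11_def by simp
  have Tf: "Tv = of_real (C^2) * v$(1,0) * cnj (v$(0,0)) + of_real (S^2) * v$(1,1) * cnj (v$(0,1))"
    unfolding Tv_def tr2 C_def S_def by simp
  have r00: "\<rho>$0$0 = of_real a"
    unfolding \<rho>_def redA[OF pos] p_def[symmetric] a_def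
    apply (simp only: sum2 pu Phi_simps uu mult_zero_right mult_zero_left add_0_right add_0_left)
    apply (simp only: of_real_add[symmetric] of_real_mult[symmetric] of_real_eq_iff)
    by (simp add: c_def C_def S_def n00_def n01_def)
  have r11: "\<rho>$1$1 = of_real d"
    unfolding \<rho>_def redA[OF pos] p_def[symmetric] d_def
    apply (simp only: sum2 pu Phi_simps uu mult_zero_right mult_zero_left add_0_right add_0_left)
    apply (simp only: of_real_add[symmetric] of_real_mult[symmetric] of_real_eq_iff)
    by (simp add: s_def C_def S_def n10_def n11_def)
  have r01: "\<rho>$0$1 = of_real (1/p) * (of_real (c * s) * Tv)"
    unfolding \<rho>_def redA[OF pos] p_def[symmetric] Tf
    by (simp add: sum2 pu Phi_simps c_def s_def C_def S_def algebra_simps power2_eq_square)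
  have r10: "\<rho>$1$0 = cnj (\<rho>$0$1)"
    unfolding \<rho>_def redA[OF pos] by (simp add: sum2 algebra_simps)
  have me: "min_eigenvalue \<rho> = (a + d - sqrt ((a-d)^2 + 4*(cmod (\<rho>$0$1))^2))/2"
    by (rule min_eig2[OF r00 r11 r10])
  have ad1: "a + d = 1"
  proof -
    have "a + d = (c^2*C^2*n00 + c^2*S^2*n01 + s^2*C^2*n10 + s^2*S^2*n11)/p"
      unfolding a_def d_def by (simp add: add_divide_distrib add.assoc)
    also have "\<dots> = p / p" using pf by simp
    finally show ?thesis using p0 by simp
  qed
  have amd: "a - d = R / p" unfolding a_def d_def Rf by (simp add: diff_divide_distrib[symmetric] algebra_simps)
  have cm: "cmod (\<rho>$0$1) = \<bar>c * s\<bar> * cmod Tv / p" unfolding r01 using p0 by (simp add: norm_mult norm_divide abs_mult)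
  have sd: "(sin (2*th))^2 = 4 * (c * s)^2" unfolding c_def s_def sin_double by (simp add: power2_eq_square)
  have "(a-d)^2 + 4*(cmod (\<rho>$0$1))^2 = (R^2 + (sin (2*th))^2 * (cmod Tv)^2) / p^2"
    unfolding amd cm sd using p0 by (simp add: field_simps power2_eq_square)
  then have "sqrt ((a-d)^2 + 4*(cmod (\<rho>$0$1))^2) = sqrt (R^2 + (sin (2*th))^2 * (cmod Tv)^2) / p"
    using p0 by (simp add: real_sqrt_divide)
  then have "min_eigenvalue \<rho> = (1 - sqrt (R^2 + (sin (2*th))^2 * (cmod Tv)^2) / p)/2"
    using me ad1 by simp
  then show ?thesis unfolding P_E_def \<rho>_def[symmetric] p_def[symmetric] R_def[symmetric] Tv_def[symmetric]
    using p0 by (simp add: field_simps)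
qed


lemma pos4:
  fixes w1 w2 w3 w4 n1 n2 n3 n4 :: real
  assumes "w1>0" "w2>0" "w3>0" "w4>0" "n1\<ge>0" "n2\<ge>0" "n3\<ge>0" "n4\<ge>0" "n1+n2+n3+n4 = 1"
  shows "w1*n1+w2*n2+w3*n3+w4*n4 > 0"
proof -
  have q: "w1*n1 \<ge> 0" "w2*n2 \<ge> 0" "w3*n3 \<ge> 0" "w4*n4 \<ge> 0" using assms by simp_all
  have "n1 > 0 \<or> n2 > 0 \<or> n3 > 0 \<or> n4 > 0" using assms by linarith
  moreover have "n1 > 0 \<Longrightarrow> w1*n1 > 0" using assms by simp
  moreover have "n2 > 0 \<Longrightarrow> w2*n2 > 0" using assms by simp
  moreover have "n3 > 0 \<Longrightarrow> w3*n3 > 0" using assms by simp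
  moreover have "n4 > 0 \<Longrightarrow> w4*n4 > 0" using assms by simp
  ultimately show ?thesis using q by linarith
qed

lemma unit_sum: "unit_vec (v::qubit2) \<Longrightarrow>
  (cmod (v$(0,0)))^2 + (cmod (v$(0,1)))^2 + (cmod (v$(1,0)))^2 + (cmod (v$(1,1)))^2 = 1"
  unfolding unit_vec_def cinner_def
  apply (simp only: sum22 cnj_mult_self')
  by (simp only: of_real_add[symmetric] of_real_eq_1_iff)

theorem theorem2:
  fixes th et :: real and phi :: "nat \<Rightarrow> qubit2"
  assumes "0 < th" and "th \<le> pi / 4" and "0 < et" and "et \<le> pi / 4" and "th \<le> et"
    and "\<forall>k\<in>{1..4}. unit_vec (phi k)"
    and "(\<Sum>k\<in>{1..4::nat}. proj (phi k)) = mat 1"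
  shows "(\<Sum>k\<in>{k\<in>{1..4}. outcome_prob th et (phi k) > 0}.
            outcome_prob th et (phi k) * P_E (post_state th et (phi k))) = 2 * (sin th)\<^sup>2
    \<longleftrightarrow>
    (\<Sum>k\<in>{1..4::nat}.
        sqrt ((Re (trace (kron (T1 th) (T2 et) ** proj (phi k))))\<^sup>2
              + (sin (2 * th))\<^sup>2 * (cmod (trace (kron (ket_bra 0 1) (T2 et) ** proj (phi k))))\<^sup>2))
      = cos (2 * th)"
proof -
  define c where "c = cos th"
  define s where "s = sin th"
  define C where "C = cos et"
  define S where "S = sin et"
  have c0: "c > 0" unfolding c_def using assms(1,2) pi_gt3 by (intro cos_gt_zero_pi) auto
  have s0: "s > 0" unfolding s_def using assms(1,2) pi_gt3 by (intro sin_gt_zero) auto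
  have C0: "C > 0" unfolding C_def using assms(3,4) pi_gt3 by (intro cos_gt_zero_pi) auto
  have S0: "S > 0" unfolding S_def using assms(3,4) pi_gt3 by (intro sin_gt_zero) auto
  define SS where "SS k = sqrt ((Re (trace (kron (T1 th) (T2 et) ** proj (phi k))))\<^sup>2
              + (sin (2 * th))\<^sup>2 * (cmod (trace (kron (ket_bra 0 1) (T2 et) ** proj (phi k))))\<^sup>2)" for k
  define p where "p k = outcome_prob th et (phi k)" for k
  have pf: "p k = c^2*C^2*(cmod (phi k$(0,0)))^2 + c^2*S^2*(cmod (phi k$(0,1)))^2
     + s^2*C^2*(cmod (phi k$(1,0)))^2 + s^2*S^2*(cmod (phi k$(1,1)))^2" for k
    unfolding p_def op_formula c_def s_def C_def S_def by simp
  have ppos: "p k > 0" if "k \<in> {1..4}" for k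
  proof -
    have u: "unit_vec (phi k)" using assms(6) that by blast
    show ?thesis unfolding pf
      by (rule pos4[OF _ _ _ _ _ _ _ _ unit_sum[OF u]]) (use c0 s0 C0 S0 in simp_all)
  qed
  have filt: "{k\<in>{1..4::nat}. outcome_prob th et (phi k) > 0} = {1..4}"
    using ppos unfolding p_def by auto
  have nsum: "(\<Sum>k\<in>{1..4::nat}. (cmod (phi k $ x))^2) = 1" for x
  proof -
    have "(\<Sum>k\<in>{1..4::nat}. proj (phi k)) $ x $ x = mat 1 $ x $ x" using assms(7) by simp
    then have "(\<Sum>k\<in>{1..4::nat}. phi k $ x * cnj (phi k $ x)) = 1" by (simp add: proj_def mat_def)
    then have "complex_of_real (\<Sum>k\<in>{1..4::nat}. (cmod (phi k $ x))^2) = 1"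
      by (simp add: cnj_mult_self)
    then show ?thesis by (metis of_real_eq_1_iff)
  qed
  have psum: "(\<Sum>k\<in>{1..4::nat}. p k) = 1"
  proof -
    have "(\<Sum>k\<in>{1..4::nat}. p k) = c^2*C^2*(\<Sum>k\<in>{1..4::nat}. (cmod (phi k$(0,0)))^2)
       + c^2*S^2*(\<Sum>k\<in>{1..4::nat}. (cmod (phi k$(0,1)))^2)
       + s^2*C^2*(\<Sum>k\<in>{1..4::nat}. (cmod (phi k$(1,0)))^2)
       + s^2*S^2*(\<Sum>k\<in>{1..4::nat}. (cmod (phi k$(1,1)))^2)"
      unfolding pf by (simp add: sum.distrib sum_distrib_left)
    also have "\<dots> = (c^2 + s^2) * (C^2 + S^2)" unfolding nsum by (simp add: algebra_simps)
    also have "\<dots> = 1" unfolding c_def s_def C_def S_def by simp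
    finally show ?thesis .
  qed
  have "(\<Sum>k\<in>{k\<in>{1..4}. outcome_prob th et (phi k) > 0}.
            outcome_prob th et (phi k) * P_E (post_state th et (phi k)))
       = (\<Sum>k\<in>{1..4::nat}. p k - SS k)"
    unfolding filt using ppos unfolding p_def SS_def by (intro sum.cong refl per_vec) auto
  also have "\<dots> = 1 - (\<Sum>k\<in>{1..4::nat}. SS k)" by (subst sum_subtractf) (simp only: psum)
  finally have L: "(\<Sum>k\<in>{k\<in>{1..4}. outcome_prob th et (phi k) > 0}.
            outcome_prob th et (phi k) * P_E (post_state th et (phi k))) = 1 - (\<Sum>k\<in>{1..4::nat}. SS k)" .
  have cd: "cos (2*th) = 1 - 2 * (sin th)^2" by (simp add: cos_double_sin)
  show ?thesis unfolding L SS_def[symmetric] cd by linarith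
qed
end
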